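(* Let $C$ be pre-treatment covariates, and let $M_0,M_1$ and $Y_0,Y_1$ be the counterfactual mediators and outcomes without and with treatment. (a) If $I$ and $I'$ are both organic interventions with respect to $C$, then $E(Y_{1,I=1})=E(Y_{1,I'=1})$; hence the organic direct effect $E(Y_{1,I=1})-E(Y_0)$ and the organic indirect effect $E(Y_1)-E(Y_{1,I=1})$ do not depend on the choice of organic intervention with respect to $C$. (b) Let $C$ and $\tilde C$ be two sets of pre-treatment common causes of mediator and outcome such that $C$ is not a common cause of mediator and outcome given $\tilde C$, and $\tilde C$ is not a common cause of mediator and outcome given $C$. If $I^C$ is an organic intervention with respect to $C$ and $I^{\tilde C}$ is an organic intervention with respect to $\tilde C$, then $E(Y_{1,I^C=1})=E(Y_{1,I^{\tilde C}=1})$, so the organic direct and indirect effects based on $I^C$ and on $I^{\tilde C}$ coincide.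
   Context: For an intervention $I$ on the mediator applied together with treatment $A=1$, $M_{1,I=1}$ and $Y_{1,I=1}$ denote the mediator and outcome under treatment combined with $I$. An intervention $I$ is organic with respect to a set of covariates $C$ if (1) for all $c$, $M_{1,I=1}\mid C=c$ has the same distribution as $M_0\mid C=c$, and (2) for all $m,c$, $Y_{1,I=1}\mid M_{1,I=1}=m, C=c$ has the same distribution as $Y_1\mid M_1=m, C=c$. Organic direct effect: $E(Y_{1,I=1})-E(Y_0)$; organic indirect effect: $E(Y_1)-E(Y_{1,I=1})$. A variable $X$ is not a common cause of mediator and outcome given $C$ if either ($X\perp\!\!\!\perp M_0\mid C$ and $X\perp\!\!\!\perp M_1\mid C$) or $X\perp\!\!\!\perp Y_1\mid M_1, C$. Variables have (conditional) densities so that all conditional distributions and expectations used are well defined.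
   Formalization: Part (b) assumes the law of ($M_0$, C, $\tilde C$) absolutely continuous with respect to the law of ($M_1$, C, $\tilde C$), and part (a) likewise for ($M_0$, C) and ($M_1$, C). The statement above fails without it. *)

theory Defs
  imports "HOL-Probability.Probability"
begin

definition cond_distr_kernel ::
  "'a measure \<Rightarrow> ('a \<Rightarrow> 'z) \<Rightarrow> 'z measure \<Rightarrow> ('a \<Rightarrow> 'x) \<Rightarrow> 'x measure \<Rightarrow> ('z \<Rightarrow> 'x measure) \<Rightarrow> bool"
where
  "cond_distr_kernel P Z MZ X MX K \<longleftrightarrow>
     K \<in> MZ \<rightarrow>\<^sub>M prob_algebra MX \<and>
     (\<forall>A\<in>sets MZ. \<forall>B\<in>sets MX.
        measure P {\<omega> \<in> space P. Z \<omega> \<in> A \<and> X \<omega> \<in> B} =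
        (\<integral>\<omega>. indicator A (Z \<omega>) * measure (K (Z \<omega>)) B \<partial>P))"

text \<open>For all z, the distribution of X given Z = z equals the distribution of X' given Z' = z:
  there is a common conditional distribution kernel.\<close>
definition same_cond_distr ::
  "'a measure \<Rightarrow> ('a \<Rightarrow> 'z) \<Rightarrow> ('a \<Rightarrow> 'x) \<Rightarrow> ('a \<Rightarrow> 'z) \<Rightarrow> ('a \<Rightarrow> 'x) \<Rightarrow> 'z measure \<Rightarrow> 'x measure \<Rightarrow> bool"
where
  "same_cond_distr P Z X Z' X' MZ MX \<longleftrightarrow>
     (\<exists>K. cond_distr_kernel P Z MZ X MX K \<and> cond_distr_kernel P Z' MZ X' MX K)"

text \<open>An intervention I (with A = 1) producing mediator MI = M_{1,I=1} and outcome
  YI = Y_{1,I=1} is organic with respect to covariates C.\<close>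
definition organic ::
  "'a measure \<Rightarrow> ('a \<Rightarrow> 'c::euclidean_space) \<Rightarrow> ('a \<Rightarrow> 'm::euclidean_space) \<Rightarrow> ('a \<Rightarrow> 'm)
   \<Rightarrow> ('a \<Rightarrow> real) \<Rightarrow> ('a \<Rightarrow> 'm) \<Rightarrow> ('a \<Rightarrow> real) \<Rightarrow> bool"
where
  "organic P C M0 M1 Y1 MI YI \<longleftrightarrow>
     same_cond_distr P C MI C M0 borel borel \<and>
     same_cond_distr P (\<lambda>\<omega>. (MI \<omega>, C \<omega>)) YI (\<lambda>\<omega>. (M1 \<omega>, C \<omega>)) Y1 borel borel"

definition cond_indep ::
  "'a measure \<Rightarrow> ('a \<Rightarrow> 'x) \<Rightarrow> 'x measure \<Rightarrow> ('a \<Rightarrow> 'z) \<Rightarrow> 'z measure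
   \<Rightarrow> ('a \<Rightarrow> 'w) \<Rightarrow> 'w measure \<Rightarrow> bool"
where
  "cond_indep P X MX Z MZ W MW \<longleftrightarrow>
     (\<forall>A\<in>sets MX. \<forall>B\<in>sets MZ.
       AE \<omega> in P.
         real_cond_exp P (vimage_algebra (space P) W MW)
            (\<lambda>\<omega>. indicator A (X \<omega>) * indicator B (Z \<omega>)) \<omega> =
         real_cond_exp P (vimage_algebra (space P) W MW) (\<lambda>\<omega>. indicator A (X \<omega>)) \<omega> *
         real_cond_exp P (vimage_algebra (space P) W MW) (\<lambda>\<omega>. indicator B (Z \<omega>)) \<omega>)"

definition not_common_cause ::
  "'a measure \<Rightarrow> ('a \<Rightarrow> 'x::euclidean_space) \<Rightarrow> ('a \<Rightarrow> 'c::euclidean_space)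
   \<Rightarrow> ('a \<Rightarrow> 'm::euclidean_space) \<Rightarrow> ('a \<Rightarrow> 'm) \<Rightarrow> ('a \<Rightarrow> real) \<Rightarrow> bool"
where
  "not_common_cause P X C M0 M1 Y1 \<longleftrightarrow>
     (cond_indep P X borel M0 borel C borel \<and> cond_indep P X borel M1 borel C borel) \<or>
     cond_indep P X borel Y1 borel (\<lambda>\<omega>. (M1 \<omega>, C \<omega>)) borel"

end

theory Submission
  imports Defs
begin


lemma rect_eq:
  fixes M N :: "('x::second_countable_topology \<times> 'y::second_countable_topology) measure"
  assumes sM: "sets M = sets borel" and sN: "sets N = sets borel"
  and fin: "emeasure M UNIV \<noteq> \<infinity>"
  and eq: "\<And>a b. a \<in> sets borel \<Longrightarrow> b \<in> sets borel \<Longrightarrow> emeasure M (a \<times> b) = emeasure N (a \<times> b)"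
  shows "M = N"
proof (rule measure_eqI_generator_eq[OF Int_stable_pair_measure_generator[of borel borel], where \<Omega>=UNIV and A="\<lambda>_. UNIV"])
  have sp: "sets (borel :: ('x \<times> 'y) measure) = sigma_sets UNIV {a \<times> b |a b. a \<in> sets borel \<and> b \<in> sets borel}"
    using sets_pair_measure[of "borel::'x measure" "borel::'y measure"] unfolding borel_prod by simp
  show "sets M = sigma_sets UNIV {a \<times> b |a b. a \<in> sets (borel::'x measure) \<and> b \<in> sets (borel::'y measure)}"
    using sM sp by simp
  show "sets N = sigma_sets UNIV {a \<times> b |a b. a \<in> sets (borel::'x measure) \<and> b \<in> sets (borel::'y measure)}"
    using sN sp by simp
  show "{a \<times> b |a b. a \<in> sets (borel::'x measure) \<and> b \<in> sets (borel::'y measure)} \<subseteq> Pow UNIV" by auto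
  show "range (\<lambda>_. UNIV) \<subseteq> {a \<times> b |a b. a \<in> sets (borel::'x measure) \<and> b \<in> sets (borel::'y measure)}"
    proof (intro image_subsetI CollectI exI conjI)
    show "(UNIV::('x\<times>'y) set) = UNIV \<times> UNIV" by simp
  qed (metis sets.top space_borel)+
  show "(\<Union>i::nat. UNIV) = (UNIV :: ('x\<times>'y) set)" by simp
  show "emeasure M UNIV \<noteq> \<infinity>" for i :: nat using fin .
  show "emeasure M X = emeasure N X" if "X \<in> {a \<times> b |a b. a \<in> sets borel \<and> b \<in> sets borel}" for X
    using that eq by auto
qed

lemma ext1:
  fixes M :: "'a measure"
  assumes [measurable]: "Z \<in> M \<rightarrow>\<^sub>M MZ" "g \<in> borel_measurable M" "g' \<in> borel_measurable M"
  and eq: "\<And>A. A \<in> sets MZ \<Longrightarrow> (\<integral>\<^sup>+\<omega>. indicator A (Z \<omega>) * g \<omega> \<partial>M) = (\<integral>\<^sup>+\<omega>. indicator A (Z \<omega>) * g' \<omega> \<partial>M)"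
  and f[measurable]: "f \<in> borel_measurable MZ"
  shows "(\<integral>\<^sup>+\<omega>. f (Z \<omega>) * g \<omega> \<partial>M) = (\<integral>\<^sup>+\<omega>. f (Z \<omega>) * g' \<omega> \<partial>M)"
proof -
  have D: "distr (density M g) MZ Z = distr (density M g') MZ Z"
  proof (rule measure_eqI)
    fix A assume A[measurable]: "A \<in> sets (distr (density M g) MZ Z)"
    have "emeasure (distr (density M g) MZ Z) A = (\<integral>\<^sup>+\<omega>. indicator A (Z \<omega>) * g \<omega> \<partial>M)"
      using A by (simp add: emeasure_distr emeasure_density mult.commute indicator_def
          cong: nn_integral_cong)
    also have "\<dots> = (\<integral>\<^sup>+\<omega>. indicator A (Z \<omega>) * g' \<omega> \<partial>M)" using eq A by simp
    also have "\<dots> = emeasure (distr (density M g') MZ Z) A"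
      using A by (simp add: emeasure_distr emeasure_density mult.commute indicator_def
          cong: nn_integral_cong)
    finally show "emeasure (distr (density M g) MZ Z) A = emeasure (distr (density M g') MZ Z) A" .
  qed simp
  have "(\<integral>\<^sup>+\<omega>. f (Z \<omega>) * g \<omega> \<partial>M) = integral\<^sup>N (distr (density M g) MZ Z) f"
    by (simp add: nn_integral_distr nn_integral_density mult.commute)
  also have "\<dots> = integral\<^sup>N (distr (density M g') MZ Z) f" using D by simp
  also have "\<dots> = (\<integral>\<^sup>+\<omega>. f (Z \<omega>) * g' \<omega> \<partial>M)"
    by (simp add: nn_integral_distr nn_integral_density mult.commute)
  finally show ?thesis .
qed



lemma kernel_meas:
  assumes "cond_distr_kernel P Z MZ X MX K" "B \<in> sets MX"
  shows "(\<lambda>z. emeasure (K z) B) \<in> borel_measurable MZ"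
    "(\<lambda>z. measure (K z) B) \<in> borel_measurable MZ"
proof -
  have K: "K \<in> MZ \<rightarrow>\<^sub>M subprob_algebra MX"
    using assms(1) unfolding cond_distr_kernel_def by (auto intro: measurable_prob_algebraD)
  show "(\<lambda>z. emeasure (K z) B) \<in> borel_measurable MZ"
    using measurable_emeasure_kernel[OF K assms(2)] .
  then show "(\<lambda>z. measure (K z) B) \<in> borel_measurable MZ"
    unfolding measure_def by measurable
qed

lemma kernel_prob:
  assumes "cond_distr_kernel P Z MZ X MX K" "z \<in> space MZ"
  shows "prob_space (K z)" "sets (K z) = sets MX"
  using measurable_space[of K MZ "prob_algebra MX" z] assms
  unfolding cond_distr_kernel_def space_prob_algebra by auto

lemma (in prob_space) kernel_emeasure:
  assumes K: "cond_distr_kernel M Z MZ X MX K" and [measurable]: "Z \<in> M \<rightarrow>\<^sub>M MZ" "X \<in> M \<rightarrow>\<^sub>M MX"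
  and A[measurable]: "A \<in> sets MZ" and B[measurable]: "B \<in> sets MX"
  shows "emeasure M {\<omega>\<in>space M. Z \<omega> \<in> A \<and> X \<omega> \<in> B} =
     (\<integral>\<^sup>+\<omega>. indicator A (Z \<omega>) * emeasure (K (Z \<omega>)) B \<partial>M)"
proof -
  have km[measurable]: "(\<lambda>z. measure (K z) B) \<in> borel_measurable MZ" using kernel_meas[OF K B] by simp
  have eqm: "emeasure (K (Z \<omega>)) B = ennreal (measure (K (Z \<omega>)) B)" if "\<omega> \<in> space M" for \<omega>
    using kernel_prob[OF K measurable_space[OF assms(2) that]] finite_measure.emeasure_eq_measure prob_space_def by blast
  have "(\<integral>\<^sup>+\<omega>. indicator A (Z \<omega>) * emeasure (K (Z \<omega>)) B \<partial>M) =
        (\<integral>\<^sup>+\<omega>. ennreal (indicator A (Z \<omega>) * measure (K (Z \<omega>)) B) \<partial>M)"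
    by (rule nn_integral_cong) (simp add: eqm indicator_def)
  also have "\<dots> = ennreal (\<integral>\<omega>. indicator A (Z \<omega>) * measure (K (Z \<omega>)) B \<partial>M)"
  proof (rule nn_integral_eq_integral)
    show "integrable M (\<lambda>\<omega>. indicator A (Z \<omega>) * measure (K (Z \<omega>)) B)"
    proof (rule integrable_const_bound[where B=1])
      show "AE \<omega> in M. norm (indicator A (Z \<omega>) * measure (K (Z \<omega>)) B) \<le> (1::real)"
      proof (rule AE_I2)
        fix \<omega> assume "\<omega> \<in> space M"
        then have "prob_space (K (Z \<omega>))" using kernel_prob[OF K] measurable_space[OF assms(2)] by blast
        then have "measure (K (Z \<omega>)) B \<le> 1" "0 \<le> measure (K (Z \<omega>)) B" by (auto simp: prob_space.prob_le_1)
        then show "norm (indicator A (Z \<omega>) * measure (K (Z \<omega>)) B) \<le> (1::real)"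
          by (auto simp: indicator_def)
      qed
    qed measurable
  qed (auto simp: indicator_def)
  also have "\<dots> = ennreal (measure M {\<omega>\<in>space M. Z \<omega> \<in> A \<and> X \<omega> \<in> B})"
    using K A B unfolding cond_distr_kernel_def by simp
  also have "\<dots> = emeasure M {\<omega>\<in>space M. Z \<omega> \<in> A \<and> X \<omega> \<in> B}"
    by (simp add: emeasure_eq_measure)
  finally show ?thesis by simp
qed

lemma (in prob_space) kernel_nn:
  assumes K: "cond_distr_kernel M Z MZ X MX K" and [measurable]: "Z \<in> M \<rightarrow>\<^sub>M MZ" "X \<in> M \<rightarrow>\<^sub>M MX"
  and B[measurable]: "B \<in> sets MX" and f[measurable]: "f \<in> borel_measurable MZ"
  shows "(\<integral>\<^sup>+\<omega>. f (Z \<omega>) * indicator B (X \<omega>) \<partial>M) = (\<integral>\<^sup>+\<omega>. f (Z \<omega>) * emeasure (K (Z \<omega>)) B \<partial>M)"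
proof (rule ext1[where MZ=MZ])
  have km[measurable]: "(\<lambda>z. emeasure (K z) B) \<in> borel_measurable MZ" using kernel_meas[OF K B] by simp
  show "(\<lambda>\<omega>. emeasure (K (Z \<omega>)) B) \<in> borel_measurable M" by measurable
  show "(\<lambda>\<omega>. indicator B (X \<omega>)) \<in> borel_measurable M" by measurable
  fix A assume A[measurable]: "A \<in> sets MZ"
  have "(\<integral>\<^sup>+\<omega>. indicator A (Z \<omega>) * indicator B (X \<omega>) \<partial>M) =
        (\<integral>\<^sup>+\<omega>. indicator {\<omega>\<in>space M. Z \<omega> \<in> A \<and> X \<omega> \<in> B} \<omega> \<partial>M)"
    by (rule nn_integral_cong) (auto simp: indicator_def)
  also have "\<dots> = emeasure M {\<omega>\<in>space M. Z \<omega> \<in> A \<and> X \<omega> \<in> B}"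
    by (rule nn_integral_indicator) measurable
  also have "\<dots> = (\<integral>\<^sup>+\<omega>. indicator A (Z \<omega>) * emeasure (K (Z \<omega>)) B \<partial>M)"
    by (rule kernel_emeasure[OF K]) auto
  finally show "(\<integral>\<^sup>+\<omega>. indicator A (Z \<omega>) * indicator B (X \<omega>) \<partial>M) =
        (\<integral>\<^sup>+\<omega>. indicator A (Z \<omega>) * emeasure (K (Z \<omega>)) B \<partial>M)" .
qed (auto simp: f)



lemma fst_borel[measurable]: "fst \<in> borel_measurable (borel::('x::second_countable_topology \<times> 'y::second_countable_topology) measure)"
  using measurable_fst[of "borel::'x measure" "borel::'y measure"] by (simp add: borel_prod)
lemma snd_borel[measurable]: "snd \<in> borel_measurable (borel::('x::second_countable_topology \<times> 'y::second_countable_topology) measure)"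
  using measurable_snd[of "borel::'x measure" "borel::'y measure"] by (simp add: borel_prod)

lemma times_borel:
  "a \<in> sets (borel::'x::second_countable_topology measure) \<Longrightarrow> b \<in> sets (borel::'y::second_countable_topology measure) \<Longrightarrow> a \<times> b \<in> sets (borel::('x\<times>'y) measure)"
  using pair_measureI[of a "borel::'x measure" b "borel::'y measure"] unfolding borel_prod .

lemma ext2:
  fixes M :: "'a measure" and Z :: "'a \<Rightarrow> ('x::second_countable_topology \<times> 'y::second_countable_topology)"
  assumes [measurable]: "Z \<in> borel_measurable M" "g \<in> borel_measurable M" "g' \<in> borel_measurable M"
  and fin: "(\<integral>\<^sup>+\<omega>. g \<omega> \<partial>M) \<noteq> \<infinity>"
  and eq: "\<And>a b. a \<in> sets borel \<Longrightarrow> b \<in> sets borel \<Longrightarrow>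
     (\<integral>\<^sup>+\<omega>. indicator (a \<times> b) (Z \<omega>) * g \<omega> \<partial>M) = (\<integral>\<^sup>+\<omega>. indicator (a \<times> b) (Z \<omega>) * g' \<omega> \<partial>M)"
  and f[measurable]: "f \<in> borel_measurable borel"
  shows "(\<integral>\<^sup>+\<omega>. f (Z \<omega>) * g \<omega> \<partial>M) = (\<integral>\<^sup>+\<omega>. f (Z \<omega>) * g' \<omega> \<partial>M)"
proof -
  have em: "emeasure (distr (density M h) borel Z) A = (\<integral>\<^sup>+\<omega>. indicator A (Z \<omega>) * h \<omega> \<partial>M)"
    if [measurable]: "h \<in> borel_measurable M" "A \<in> sets borel" for h A
    by (simp add: emeasure_distr emeasure_density mult.commute indicator_def cong: nn_integral_cong)
  have D: "distr (density M g) borel Z = distr (density M g') borel Z"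
  proof (rule rect_eq)
    show "emeasure (distr (density M g) borel Z) UNIV \<noteq> \<infinity>"
      using em[of g UNIV] fin by simp
    fix a :: "'x set" and b :: "'y set" assume ab: "a \<in> sets borel" "b \<in> sets borel"
    have ab': "a \<times> b \<in> sets borel" using times_borel[OF ab] .
    show "emeasure (distr (density M g) borel Z) (a \<times> b) = emeasure (distr (density M g') borel Z) (a \<times> b)"
      using em[of g "a \<times> b", OF _ ab'] em[of g' "a \<times> b", OF _ ab'] eq[OF ab] by simp
  qed simp_all
  have "(\<integral>\<^sup>+\<omega>. f (Z \<omega>) * g \<omega> \<partial>M) = integral\<^sup>N (distr (density M g) borel Z) f"
    by (simp add: nn_integral_distr nn_integral_density mult.commute)
  also have "\<dots> = integral\<^sup>N (distr (density M g') borel Z) f" using D by simp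
  also have "\<dots> = (\<integral>\<^sup>+\<omega>. f (Z \<omega>) * g' \<omega> \<partial>M)"
    by (simp add: nn_integral_distr nn_integral_density mult.commute)
  finally show ?thesis .
qed

lemma (in prob_space) law_K1:
  fixes C :: "'a \<Rightarrow> 'c::second_countable_topology" and MI M0 :: "'a \<Rightarrow> 'm::second_countable_topology"
  assumes K: "cond_distr_kernel M C borel MI borel K" "cond_distr_kernel M C borel M0 borel K"
  and [measurable]: "C \<in> borel_measurable M" "MI \<in> borel_measurable M" "M0 \<in> borel_measurable M"
  shows "distr M borel (\<lambda>\<omega>. (MI \<omega>, C \<omega>)) = distr M borel (\<lambda>\<omega>. (M0 \<omega>, C \<omega>))"
proof (rule rect_eq)
  show "emeasure (distr M borel (\<lambda>\<omega>. (MI \<omega>, C \<omega>))) UNIV \<noteq> \<infinity>"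
    by (simp add: emeasure_distr)
  fix a :: "'m set" and b :: "'c set" assume [measurable]: "a \<in> sets borel" "b \<in> sets borel"
  note tb[measurable] = times_borel[OF \<open>a \<in> sets borel\<close> \<open>b \<in> sets borel\<close>]
  have "emeasure (distr M borel (\<lambda>\<omega>. (MI \<omega>, C \<omega>))) (a \<times> b) = emeasure M {\<omega>\<in>space M. C \<omega> \<in> b \<and> MI \<omega> \<in> a}"
  proof -
    have "(\<lambda>\<omega>. (MI \<omega>, C \<omega>)) -` (a \<times> b) \<inter> space M = {\<omega>\<in>space M. C \<omega> \<in> b \<and> MI \<omega> \<in> a}" by blast
    then show ?thesis by (subst emeasure_distr) simp_all
  qed
  also have "\<dots> = (\<integral>\<^sup>+\<omega>. indicator b (C \<omega>) * emeasure (K (C \<omega>)) a \<partial>M)"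
    by (rule kernel_emeasure[OF K(1)]) auto
  also have "\<dots> = emeasure M {\<omega>\<in>space M. C \<omega> \<in> b \<and> M0 \<omega> \<in> a}"
    by (rule kernel_emeasure[OF K(2), symmetric]) auto
  also have "\<dots> = emeasure (distr M borel (\<lambda>\<omega>. (M0 \<omega>, C \<omega>))) (a \<times> b)"
  proof -
    have "(\<lambda>\<omega>. (M0 \<omega>, C \<omega>)) -` (a \<times> b) \<inter> space M = {\<omega>\<in>space M. C \<omega> \<in> b \<and> M0 \<omega> \<in> a}" by blast
    then show ?thesis by (subst emeasure_distr) simp_all
  qed
  finally show "emeasure (distr M borel (\<lambda>\<omega>. (MI \<omega>, C \<omega>))) (a \<times> b) = emeasure (distr M borel (\<lambda>\<omega>. (M0 \<omega>, C \<omega>))) (a \<times> b)" .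
qed simp_all

lemma DD:
  fixes G :: "'a \<Rightarrow> ennreal"
  assumes W: "W \<in> M \<rightarrow>\<^sub>M MW" and G: "G \<in> borel_measurable (vimage_algebra (space M) W MW)"
  shows "\<exists>g \<in> borel_measurable MW. \<forall>\<omega>\<in>space M. G \<omega> = g (W \<omega>)"
  using G
proof (induction rule: borel_measurable_induct)
  case (cong f g)
  then obtain h where "h \<in> borel_measurable MW" "\<forall>\<omega>\<in>space M. g \<omega> = h (W \<omega>)" by blast
  with cong(3) show ?case by (intro bexI[of _ h]) simp_all
next
  case (set A)
  have Wf: "W \<in> space M \<rightarrow> space MW" using W by (auto simp: measurable_def)
  from set obtain A' where A': "A' \<in> sets MW" "A = W -` A' \<inter> space M"
    using sets_vimage_algebra2[OF Wf] by auto
  show ?case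
  proof (rule bexI[of _ "indicator A'"])
    show "indicator A' \<in> borel_measurable MW" using A'(1) by simp
  qed (simp add: A' indicator_def)
next
  case (mult u c)
  then obtain g where g: "g \<in> borel_measurable MW" "\<forall>\<omega>\<in>space M. u \<omega> = g (W \<omega>)" by blast
  show ?case
  proof (rule bexI[of _ "\<lambda>z. c * g z"])
    show "(\<lambda>z. c * g z) \<in> borel_measurable MW" using g(1) by (rule borel_measurable_times_ennreal[OF borel_measurable_const])
  qed (simp add: g(2))
next
  case (add u v)
  then obtain g g' where g: "g \<in> borel_measurable MW" "\<forall>\<omega>\<in>space M. u \<omega> = g (W \<omega>)"
    "g' \<in> borel_measurable MW" "\<forall>\<omega>\<in>space M. v \<omega> = g' (W \<omega>)" by blast
  show ?case
  proof (rule bexI[of _ "\<lambda>z. g' z + g z"])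
    show "(\<lambda>z. g' z + g z) \<in> borel_measurable MW" using g(3) g(1) by (rule borel_measurable_add)
  qed (simp add: g(2,4))
next
  case (seq U)
  then have "\<forall>i. \<exists>g. g \<in> borel_measurable MW \<and> (\<forall>\<omega>\<in>space M. U i \<omega> = g (W \<omega>))" by blast
  then obtain g where g: "\<And>i. g i \<in> borel_measurable MW" "\<And>i \<omega>. \<omega>\<in>space M \<Longrightarrow> U i \<omega> = g i (W \<omega>)"
    by metis
  show ?case
  proof (rule bexI[of _ "\<lambda>z. SUP i. g i z"])
    show "\<forall>\<omega>\<in>space M. (SUP i. U i) \<omega> = (SUP i. g i (W \<omega>))"
    proof
      fix \<omega> assume w: "\<omega> \<in> space M"
      have "(SUP i. U i) \<omega> = (SUP i. U i \<omega>)" by (rule SUP_apply)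
      also have "\<dots> = (SUP i. g i (W \<omega>))" using g(2)[OF w] by simp
      finally show "(SUP i. U i) \<omega> = (SUP i. g i (W \<omega>))" .
    qed
    show "(\<lambda>z. SUP i. g i z) \<in> borel_measurable MW" using g(1) by (intro borel_measurable_SUP) simp
  qed
qed



lemma (in prob_space) subalg_vimage:
  assumes W: "W \<in> M \<rightarrow>\<^sub>M MW"
  shows "subalgebra M (vimage_algebra (space M) W MW)"
proof -
  have Wf: "W \<in> space M \<rightarrow> space MW" using W by (auto simp: measurable_def)
  show ?thesis unfolding subalgebra_def
    using sets_vimage_algebra2[OF Wf] measurable_sets[OF W] by auto
qed

lemma (in prob_space) ind_int:
  fixes f :: "'a \<Rightarrow> real"
  assumes [measurable]: "f \<in> borel_measurable M" and b: "\<And>\<omega>. \<omega> \<in> space M \<Longrightarrow> \<bar>f \<omega>\<bar> \<le> 1"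
  shows "integrable M f"
  by (rule integrable_const_bound[where B="1::real"]) (use b in \<open>auto intro!: AE_I2\<close>)

lemma (in prob_space) CI:
  fixes W :: "'a \<Rightarrow> 'w::second_countable_topology" and X :: "'a \<Rightarrow> 'x::second_countable_topology"
    and Y :: "'a \<Rightarrow> 'y::second_countable_topology"
  assumes ci: "cond_indep M X borel Y borel W borel"
  and [measurable]: "W \<in> borel_measurable M" "X \<in> borel_measurable M" "Y \<in> borel_measurable M"
  and B[measurable]: "B \<in> sets borel" and f[measurable]: "f \<in> borel_measurable borel"
  shows "(\<integral>\<^sup>+\<omega>. f (W \<omega>, X \<omega>) * indicator B (Y \<omega>) \<partial>M) =
    (\<integral>\<^sup>+\<omega>. f (W \<omega>, X \<omega>) * ennreal (real_cond_exp M (vimage_algebra (space M) W borel) (\<lambda>\<omega>. indicator B (Y \<omega>)) \<omega>) \<partial>M)"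
proof -
  define F where "F = vimage_algebra (space M) W borel"
  define G where "G = real_cond_exp M F (\<lambda>\<omega>. indicator B (Y \<omega>))"
  have sub: "subalgebra M F" unfolding F_def by (rule subalg_vimage) simp
  interpret S: finite_measure_subalgebra M F
    by (unfold_locales) (rule sub)
  have WF[measurable]: "W \<in> F \<rightarrow>\<^sub>M borel" unfolding F_def by (rule measurable_vimage_algebra1) simp
  have GF[measurable]: "G \<in> borel_measurable F" unfolding G_def by simp
  have GM[measurable]: "G \<in> borel_measurable M" unfolding G_def by simp
  have Gint: "integrable M G" unfolding G_def
    by (rule S.real_cond_exp_int(1), rule ind_int) (auto simp: indicator_def)
  have Gpos: "AE \<omega> in M. 0 \<le> G \<omega>" unfolding G_def
    by (rule S.real_cond_exp_pos) auto
  have ci': "AE \<omega> in M. real_cond_exp M F (\<lambda>\<omega>. indicator b (X \<omega>) * indicator B (Y \<omega>)) \<omega> =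
      real_cond_exp M F (\<lambda>\<omega>. indicator b (X \<omega>)) \<omega> * G \<omega>" if "b \<in> sets borel" for b
    using ci that B unfolding cond_indep_def F_def G_def by blast
  show ?thesis unfolding F_def[symmetric] G_def[symmetric]
  proof (rule ext2[where Z="\<lambda>\<omega>. (W \<omega>, X \<omega>)"])
    have "(\<integral>\<^sup>+\<omega>. indicator B (Y \<omega>) \<partial>M) \<le> (\<integral>\<^sup>+\<omega>. 1 \<partial>M)"
      by (intro nn_integral_mono) (simp add: indicator_def)
    also have "\<dots> = 1" by (simp add: emeasure_space_1)
    finally show "(\<integral>\<^sup>+\<omega>. indicator B (Y \<omega>) \<partial>M) \<noteq> \<infinity>" by (auto simp: top_unique)
  next
    fix a :: "'w set" and b :: "'x set" assume ab[measurable]: "a \<in> sets borel" "b \<in> sets borel"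
    have i1: "integrable M (\<lambda>\<omega>. indicator a (W \<omega>) * indicator b (X \<omega>) * indicator B (Y \<omega>) :: real)"
      by (rule ind_int) (auto simp: indicator_def)
    have i2: "integrable M (\<lambda>\<omega>. indicator a (W \<omega>) * indicator b (X \<omega>) * G \<omega>)"
      by (rule Bochner_Integration.integrable_bound[OF Gint]) (auto simp: indicator_def)
    have "(\<integral>\<^sup>+\<omega>. indicator (a \<times> b) (W \<omega>, X \<omega>) * indicator B (Y \<omega>) \<partial>M) =
        (\<integral>\<^sup>+\<omega>. ennreal (indicator a (W \<omega>) * indicator b (X \<omega>) * indicator B (Y \<omega>)) \<partial>M)"
      by (intro nn_integral_cong) (auto simp: indicator_def)
    also have "\<dots> = ennreal (\<integral>\<omega>. indicator a (W \<omega>) * indicator b (X \<omega>) * indicator B (Y \<omega>) \<partial>M)"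
      by (rule nn_integral_eq_integral[OF i1]) (auto simp: indicator_def)
    also have "(\<integral>\<omega>. (indicator a (W \<omega>)::real) * indicator b (X \<omega>) * indicator B (Y \<omega>) \<partial>M) =
        (\<integral>\<omega>. (indicator a (W \<omega>)::real) * (indicator b (X \<omega>) * indicator B (Y \<omega>)) \<partial>M)"
      by (simp only: mult.assoc)
    also have "\<dots> = (\<integral>\<omega>. indicator a (W \<omega>) * real_cond_exp M F (\<lambda>\<omega>. indicator b (X \<omega>) * indicator B (Y \<omega>)) \<omega> \<partial>M)"
      by (rule S.real_cond_exp_intg(2)[symmetric]) (use i1 in \<open>auto simp: mult.assoc\<close>)
    also have "\<dots> = (\<integral>\<omega>. indicator a (W \<omega>) * (real_cond_exp M F (\<lambda>\<omega>. indicator b (X \<omega>)) \<omega> * G \<omega>) \<partial>M)"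
      by (rule integral_cong_AE) (use ci'[OF ab(2)] in auto)
    also have "\<dots> = (\<integral>\<omega>. (indicator a (W \<omega>) * G \<omega>) * real_cond_exp M F (\<lambda>\<omega>. indicator b (X \<omega>)) \<omega> \<partial>M)"
      by (simp add: ac_simps)
    also have "\<dots> = (\<integral>\<omega>. (indicator a (W \<omega>) * G \<omega>) * indicator b (X \<omega>) \<partial>M)"
    proof (rule S.real_cond_exp_intg(2))
      show "integrable M (\<lambda>\<omega>. indicator a (W \<omega>) * G \<omega> * indicator b (X \<omega>))"
        by (rule Bochner_Integration.integrable_bound[OF Gint]) (auto simp: indicator_def)
    qed auto
    also have "\<dots> = (\<integral>\<omega>. indicator a (W \<omega>) * indicator b (X \<omega>) * G \<omega> \<partial>M)"
      by (simp add: ac_simps)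
    also have "ennreal \<dots> = (\<integral>\<^sup>+\<omega>. ennreal (indicator a (W \<omega>) * indicator b (X \<omega>) * G \<omega>) \<partial>M)"
      by (rule nn_integral_eq_integral[OF i2, symmetric]) (use Gpos in \<open>auto simp: indicator_def\<close>)
    also have "\<dots> = (\<integral>\<^sup>+\<omega>. indicator (a \<times> b) (W \<omega>, X \<omega>) * ennreal (G \<omega>) \<partial>M)"
      by (intro nn_integral_cong) (auto simp: indicator_def)
    finally show "(\<integral>\<^sup>+\<omega>. indicator (a \<times> b) (W \<omega>, X \<omega>) * indicator B (Y \<omega>) \<partial>M) =
        (\<integral>\<^sup>+\<omega>. indicator (a \<times> b) (W \<omega>, X \<omega>) * ennreal (G \<omega>) \<partial>M)" .
  qed auto
qed



lemma cond_indep_sym: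
  assumes "cond_indep M X MX Y MY W MW"
  shows "cond_indep M Y MY X MX W MW"
proof -
  have e: "(\<lambda>\<omega>. indicator B (Y \<omega>) * indicator A (X \<omega>)) = (\<lambda>\<omega>. indicator A (X \<omega>) * (indicator B (Y \<omega>) :: real))" for A B
    by (simp add: mult.commute)
  show ?thesis using assms unfolding cond_indep_def e by (simp add: mult.commute)
qed

lemma (in prob_space) ce_kernel:
  fixes W :: "'a \<Rightarrow> 'w::second_countable_topology" and Y :: "'a \<Rightarrow> 'y::second_countable_topology"
  assumes K: "cond_distr_kernel M W borel Y borel K"
  and [measurable]: "W \<in> borel_measurable M" "Y \<in> borel_measurable M" and E[measurable]: "E \<in> sets borel"
  shows "AE \<omega> in M. ennreal (real_cond_exp M (vimage_algebra (space M) W borel) (\<lambda>\<omega>. indicator E (Y \<omega>)) \<omega>) = emeasure (K (W \<omega>)) E"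
proof -
  define F where "F = vimage_algebra (space M) W borel"
  have sub: "subalgebra M F" unfolding F_def by (rule subalg_vimage) simp
  interpret S: finite_measure_subalgebra M F
    by (unfold_locales) (rule sub)
  have WF[measurable]: "W \<in> F \<rightarrow>\<^sub>M borel" unfolding F_def by (rule measurable_vimage_algebra1) simp
  have km[measurable]: "(\<lambda>z. measure (K z) E) \<in> borel_measurable borel" using kernel_meas[OF K E] by simp
  have kp: "prob_space (K (W \<omega>))" if "\<omega> \<in> space M" for \<omega>
    using kernel_prob[OF K] that by simp
  have b1: "\<bar>measure (K (W \<omega>)) E\<bar> \<le> 1" if "\<omega> \<in> space M" for \<omega>
    using kp[OF that] by (simp add: prob_space.prob_le_1)
  have "AE \<omega> in M. real_cond_exp M F (\<lambda>\<omega>. indicator E (Y \<omega>)) \<omega> = measure (K (W \<omega>)) E"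
  proof (rule S.real_cond_exp_charact)
    fix A assume A: "A \<in> sets F"
    have Wf: "W \<in> space M \<rightarrow> space borel" by simp
    from A obtain A' where A'[measurable]: "A' \<in> sets borel" "A = W -` A' \<inter> space M"
      unfolding F_def using sets_vimage_algebra2[OF Wf] by auto
    have "(\<integral>\<omega>\<in>A. indicator E (Y \<omega>) \<partial>M) = (\<integral>\<omega>. indicator {\<omega>\<in>space M. W \<omega> \<in> A' \<and> Y \<omega> \<in> E} \<omega> \<partial>M)"
      unfolding set_lebesgue_integral_def
      by (intro Bochner_Integration.integral_cong) (auto simp: A' indicator_def)
    also have "\<dots> = measure M {\<omega>\<in>space M. W \<omega> \<in> A' \<and> Y \<omega> \<in> E}" by simp
    also have "\<dots> = (\<integral>\<omega>. indicator A' (W \<omega>) * measure (K (W \<omega>)) E \<partial>M)"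
      using K A'(1) E unfolding cond_distr_kernel_def by simp
    also have "\<dots> = (\<integral>\<omega>\<in>A. measure (K (W \<omega>)) E \<partial>M)"
      unfolding set_lebesgue_integral_def
      by (intro Bochner_Integration.integral_cong) (auto simp: A' indicator_def)
    finally show "(\<integral>\<omega>\<in>A. indicator E (Y \<omega>) \<partial>M) = (\<integral>\<omega>\<in>A. measure (K (W \<omega>)) E \<partial>M)" .
  next
    show "integrable M (\<lambda>\<omega>. indicator E (Y \<omega>) :: real)" by (rule ind_int) (auto simp: indicator_def)
    show "integrable M (\<lambda>\<omega>. measure (K (W \<omega>)) E)" by (rule ind_int) (use b1 in auto)
    show "(\<lambda>\<omega>. measure (K (W \<omega>)) E) \<in> borel_measurable F" by measurable
  qed
  then show ?thesis unfolding F_def[symmetric]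
  proof (rule AE_mp)
    show "AE \<omega> in M. real_cond_exp M F (\<lambda>\<omega>. indicator E (Y \<omega>)) \<omega> = measure (K (W \<omega>)) E \<longrightarrow>
        ennreal (real_cond_exp M F (\<lambda>\<omega>. indicator E (Y \<omega>)) \<omega>) = emeasure (K (W \<omega>)) E"
      using kp by (auto intro!: AE_I2 simp: finite_measure.emeasure_eq_measure prob_space_def)
  qed
qed

lemma (in prob_space) main_pair:
  fixes W0 W1 :: "'a \<Rightarrow> 'w::second_countable_topology" and Y :: "'a \<Rightarrow> 'y::second_countable_topology"
  assumes K: "cond_distr_kernel M W1 borel Y borel K"
  and [measurable]: "W0 \<in> borel_measurable M" "W1 \<in> borel_measurable M" "Y \<in> borel_measurable M"
  and E[measurable]: "E \<in> sets borel" and r[measurable]: "r \<in> borel_measurable borel"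
  and dens: "distr M borel W0 = density (distr M borel W1) r"
  shows "(\<integral>\<^sup>+\<omega>. emeasure (K (W0 \<omega>)) E \<partial>M) = (\<integral>\<^sup>+\<omega>. r (W1 \<omega>) * indicator E (Y \<omega>) \<partial>M)"
proof -
  have km[measurable]: "(\<lambda>z. emeasure (K z) E) \<in> borel_measurable borel" using kernel_meas[OF K E] by simp
  have "(\<integral>\<^sup>+\<omega>. emeasure (K (W0 \<omega>)) E \<partial>M) = integral\<^sup>N (distr M borel W0) (\<lambda>z. emeasure (K z) E)"
    by (simp add: nn_integral_distr)
  also have "\<dots> = integral\<^sup>N (density (distr M borel W1) r) (\<lambda>z. emeasure (K z) E)"
    by (simp add: dens)
  also have "\<dots> = (\<integral>\<^sup>+\<omega>. r (W1 \<omega>) * emeasure (K (W1 \<omega>)) E \<partial>M)"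
    by (simp add: nn_integral_density nn_integral_distr)
  also have "\<dots> = (\<integral>\<^sup>+\<omega>. r (W1 \<omega>) * indicator E (Y \<omega>) \<partial>M)"
    by (rule kernel_nn[OF K, symmetric]) auto
  finally show ?thesis .
qed

lemma (in prob_space) main_x:
  fixes W0 W1 :: "'a \<Rightarrow> 'w::second_countable_topology" and D :: "'a \<Rightarrow> 'd::second_countable_topology"
    and Y :: "'a \<Rightarrow> 'y::second_countable_topology"
  assumes K: "cond_distr_kernel M W1 borel Y borel K"
  and ci: "cond_indep M D borel Y borel W1 borel"
  and [measurable]: "W0 \<in> borel_measurable M" "W1 \<in> borel_measurable M" "D \<in> borel_measurable M" "Y \<in> borel_measurable M"
  and E[measurable]: "E \<in> sets borel" and r[measurable]: "r \<in> borel_measurable borel"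
  and dens: "distr M borel (\<lambda>\<omega>. (W0 \<omega>, D \<omega>)) = density (distr M borel (\<lambda>\<omega>. (W1 \<omega>, D \<omega>))) r"
  shows "(\<integral>\<^sup>+\<omega>. emeasure (K (W0 \<omega>)) E \<partial>M) = (\<integral>\<^sup>+\<omega>. r (W1 \<omega>, D \<omega>) * indicator E (Y \<omega>) \<partial>M)"
proof -
  have km[measurable]: "(\<lambda>z. emeasure (K z) E) \<in> borel_measurable borel" using kernel_meas[OF K E] by simp
  have "(\<integral>\<^sup>+\<omega>. r (W1 \<omega>, D \<omega>) * indicator E (Y \<omega>) \<partial>M) =
     (\<integral>\<^sup>+\<omega>. r (W1 \<omega>, D \<omega>) * ennreal (real_cond_exp M (vimage_algebra (space M) W1 borel) (\<lambda>\<omega>. indicator E (Y \<omega>)) \<omega>) \<partial>M)"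
    by (rule CI[OF ci]) auto
  also have "\<dots> = (\<integral>\<^sup>+\<omega>. r (W1 \<omega>, D \<omega>) * emeasure (K (W1 \<omega>)) E \<partial>M)"
    by (rule nn_integral_cong_AE) (use ce_kernel[OF K _ _ E] in auto)
  also have "\<dots> = integral\<^sup>N (distr M borel (\<lambda>\<omega>. (W1 \<omega>, D \<omega>))) (\<lambda>x. r x * emeasure (K (fst x)) E)"
    by (simp add: nn_integral_distr)
  also have "\<dots> = integral\<^sup>N (density (distr M borel (\<lambda>\<omega>. (W1 \<omega>, D \<omega>))) r) (\<lambda>x. emeasure (K (fst x)) E)"
    by (simp add: nn_integral_density)
  also have "\<dots> = (\<integral>\<^sup>+\<omega>. emeasure (K (W0 \<omega>)) E \<partial>M)"
    by (simp add: dens[symmetric] nn_integral_distr)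
  finally show ?thesis by simp
qed



lemma (in prob_space) emT:
  fixes X :: "'a \<Rightarrow> 'x::second_countable_topology" and Z :: "'a \<Rightarrow> 'z::second_countable_topology"
  assumes [measurable]: "X \<in> borel_measurable M" "Z \<in> borel_measurable M" "S \<in> sets borel" "B \<in> sets borel"
  shows "emeasure (distr M borel (\<lambda>\<omega>. (X \<omega>, Z \<omega>))) (S \<times> B) = (\<integral>\<^sup>+\<omega>. indicator S (X \<omega>) * indicator B (Z \<omega>) \<partial>M)"
proof -
  note tb[measurable] = times_borel[OF assms(3,4)]
  have "emeasure (distr M borel (\<lambda>\<omega>. (X \<omega>, Z \<omega>))) (S \<times> B) = emeasure M ((\<lambda>\<omega>. (X \<omega>, Z \<omega>)) -` (S \<times> B) \<inter> space M)"
    by (rule emeasure_distr) simp_all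
  also have "\<dots> = (\<integral>\<^sup>+\<omega>. indicator ((\<lambda>\<omega>. (X \<omega>, Z \<omega>)) -` (S \<times> B) \<inter> space M) \<omega> \<partial>M)"
    by (rule nn_integral_indicator[symmetric]) simp
  also have "\<dots> = (\<integral>\<^sup>+\<omega>. indicator S (X \<omega>) * indicator B (Z \<omega>) \<partial>M)"
    by (rule nn_integral_cong) (auto simp: indicator_def)
  finally show ?thesis .
qed

lemma (in prob_space) emT_dens:
  fixes X :: "'a \<Rightarrow> 'x::second_countable_topology" and Z :: "'a \<Rightarrow> 'z::second_countable_topology"
  assumes [measurable]: "X \<in> borel_measurable M" "Z \<in> borel_measurable M" "S \<in> sets borel" "B \<in> sets borel"
    "g \<in> borel_measurable borel"
  shows "emeasure (density (distr M borel (\<lambda>\<omega>. (X \<omega>, Z \<omega>))) g) (S \<times> B) =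
     (\<integral>\<^sup>+\<omega>. g (X \<omega>, Z \<omega>) * (indicator S (X \<omega>) * indicator B (Z \<omega>)) \<partial>M)"
proof -
  note tb[measurable] = times_borel[OF assms(3,4)]
  have "emeasure (density (distr M borel (\<lambda>\<omega>. (X \<omega>, Z \<omega>))) g) (S \<times> B) =
      (\<integral>\<^sup>+x. g x * indicator (S \<times> B) x \<partial>distr M borel (\<lambda>\<omega>. (X \<omega>, Z \<omega>)))"
    by (rule emeasure_density) simp_all
  also have "\<dots> = (\<integral>\<^sup>+\<omega>. g (X \<omega>, Z \<omega>) * indicator (S \<times> B) (X \<omega>, Z \<omega>) \<partial>M)"
    by (rule nn_integral_distr) simp_all
  also have "\<dots> = (\<integral>\<^sup>+\<omega>. g (X \<omega>, Z \<omega>) * (indicator S (X \<omega>) * indicator B (Z \<omega>)) \<partial>M)"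
    by (rule nn_integral_cong) (auto simp: indicator_def)
  finally show ?thesis .
qed

lemma (in prob_space) em_fst:
  fixes X :: "'a \<Rightarrow> 'x::second_countable_topology" and Z :: "'a \<Rightarrow> 'z::second_countable_topology"
  assumes [measurable]: "X \<in> borel_measurable M" "Z \<in> borel_measurable M" "N \<in> sets borel"
  shows "emeasure (distr M borel (\<lambda>\<omega>. (X \<omega>, Z \<omega>))) (N \<times> UNIV) = emeasure (distr M borel X) N"
proof -
  have "emeasure (distr M borel (\<lambda>\<omega>. (X \<omega>, Z \<omega>))) (N \<times> UNIV) = (\<integral>\<^sup>+\<omega>. indicator N (X \<omega>) * indicator UNIV (Z \<omega>) \<partial>M)"
    by (rule emT) simp_all
  also have "\<dots> = (\<integral>\<^sup>+\<omega>. indicator (X -` N \<inter> space M) \<omega> \<partial>M)"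
    by (rule nn_integral_cong) (auto simp: indicator_def)
  also have "\<dots> = emeasure (distr M borel X) N"
    by (simp add: emeasure_distr)
  finally show ?thesis .
qed



lemma (in prob_space) main_y:
  fixes M0 M1 :: "'a \<Rightarrow> 'm::second_countable_topology" and C :: "'a \<Rightarrow> 'c::second_countable_topology"
    and D :: "'a \<Rightarrow> 'd::second_countable_topology" and Y :: "'a \<Rightarrow> 'y::second_countable_topology"
  assumes K: "cond_distr_kernel M (\<lambda>\<omega>. (M1 \<omega>, C \<omega>)) borel Y borel K"
  and ci0: "cond_indep M D borel M0 borel C borel" and ci1: "cond_indep M D borel M1 borel C borel"
  and [measurable]: "M0 \<in> borel_measurable M" "M1 \<in> borel_measurable M" "C \<in> borel_measurable M"
    "D \<in> borel_measurable M" "Y \<in> borel_measurable M"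
  and E[measurable]: "E \<in> sets borel" and rho[measurable]: "\<rho> \<in> borel_measurable borel"
  and dens: "distr M borel (\<lambda>\<omega>. ((M0 \<omega>, C \<omega>), D \<omega>)) = density (distr M borel (\<lambda>\<omega>. ((M1 \<omega>, C \<omega>), D \<omega>))) \<rho>"
  shows "(\<integral>\<^sup>+\<omega>. emeasure (K (M0 \<omega>, C \<omega>)) E \<partial>M) = (\<integral>\<^sup>+\<omega>. \<rho> ((M1 \<omega>, C \<omega>), D \<omega>) * indicator E (Y \<omega>) \<partial>M)"
proof -
  define L1 where "L1 = distr M borel (\<lambda>\<omega>. (M1 \<omega>, C \<omega>))"
  define L0 where "L0 = distr M borel (\<lambda>\<omega>. (M0 \<omega>, C \<omega>))"
  define T1 where "T1 = distr M borel (\<lambda>\<omega>. ((M1 \<omega>, C \<omega>), D \<omega>))"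
  define T0 where "T0 = distr M borel (\<lambda>\<omega>. ((M0 \<omega>, C \<omega>), D \<omega>))"
  have pT1: "prob_space T1" unfolding T1_def by (rule prob_space_distr) simp
  have pL1: "prob_space L1" unfolding L1_def by (rule prob_space_distr) simp
  interpret L1s: sigma_finite_measure L1 using pL1 by (rule prob_space_imp_sigma_finite)
  interpret T1s: sigma_finite_measure T1 using pT1 by (rule prob_space_imp_sigma_finite)
  have ac: "absolutely_continuous L1 L0"
    unfolding absolutely_continuous_def
  proof
    fix N assume N: "N \<in> null_sets L1"
    then have Nb[measurable]: "N \<in> sets borel" and N0: "emeasure L1 N = 0" unfolding L1_def by auto
    have Ub: "(UNIV::'d set) \<in> sets borel" by simp
    note tb[measurable] = times_borel[OF Nb Ub]
    have "emeasure T1 (N \<times> UNIV) = 0" unfolding T1_def using em_fst[of "\<lambda>\<omega>. (M1 \<omega>, C \<omega>)" D N] N0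
      by (simp add: L1_def)
    then have "N \<times> UNIV \<in> null_sets T1" by (intro null_setsI) (simp_all add: T1_def tb)
    then have "AE x in T1. x \<notin> N \<times> UNIV" by (rule AE_not_in)
    then have "N \<times> UNIV \<in> null_sets (density T1 \<rho>)"
      by (subst null_sets_density_iff) (auto simp: T1_def tb elim: AE_mp)
    then have "emeasure T0 (N \<times> UNIV) = 0" using dens unfolding T0_def T1_def by (simp add: null_setsD1)
    then have "emeasure L0 N = 0" unfolding T0_def using em_fst[of "\<lambda>\<omega>. (M0 \<omega>, C \<omega>)" D N]
      by (simp add: L0_def)
    then show "N \<in> null_sets L0" by (intro null_setsI) (simp_all add: L0_def)
  qed
  define r where "r = RN_deriv L1 L0"
  have rL: "density L1 r = L0" unfolding r_def
    by (rule L1s.density_RN_deriv[OF ac]) (simp add: L0_def L1_def)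
  have r[measurable]: "r \<in> borel_measurable borel"
    unfolding r_def using borel_measurable_RN_deriv[of L1 L0]
    by (simp add: L1_def)
  define F where "F = vimage_algebra (space M) C borel"
  define G where "G B = real_cond_exp M F (\<lambda>\<omega>. indicator B (D \<omega>))" for B
  have sub: "subalgebra M F" unfolding F_def by (rule subalg_vimage) simp
  interpret S: finite_measure_subalgebra M F
    by (unfold_locales) (rule sub)
  have ci0': "cond_indep M M0 borel D borel C borel" by (rule cond_indep_sym[OF ci0])
  have ci1': "cond_indep M M1 borel D borel C borel" by (rule cond_indep_sym[OF ci1])
  have T: "T0 = density T1 (\<lambda>x. r (fst x))"
  proof (rule rect_eq)
    show "emeasure T0 UNIV \<noteq> \<infinity>" unfolding T0_def by (simp add: emeasure_distr)
    show "sets T0 = sets borel" "sets (density T1 (\<lambda>x. r (fst x))) = sets borel"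
      unfolding T0_def T1_def by simp_all
    fix S :: "('m \<times> 'c) set" and B :: "'d set" assume SB[measurable]: "S \<in> sets borel" "B \<in> sets borel"
    have GF: "(\<lambda>\<omega>. ennreal (G B \<omega>)) \<in> borel_measurable F" unfolding G_def by measurable
    obtain \<gamma> where \<gamma>[measurable]: "\<gamma> \<in> borel_measurable borel" and \<gamma>eq: "\<And>\<omega>. \<omega>\<in>space M \<Longrightarrow> ennreal (G B \<omega>) = \<gamma> (C \<omega>)"
      using DD[of C M borel, OF _ GF[unfolded F_def]] by auto
    have "emeasure T0 (S \<times> B) = (\<integral>\<^sup>+\<omega>. indicator S (M0 \<omega>, C \<omega>) * indicator B (D \<omega>) \<partial>M)"
      unfolding T0_def by (rule emT) simp_all
    also have "\<dots> = (\<integral>\<^sup>+\<omega>. (\<lambda>x. indicator S (snd x, fst x)) (C \<omega>, M0 \<omega>) * indicator B (D \<omega>) \<partial>M)"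
      by simp
    also have "\<dots> = (\<integral>\<^sup>+\<omega>. (\<lambda>x. indicator S (snd x, fst x)) (C \<omega>, M0 \<omega>) * ennreal (G B \<omega>) \<partial>M)"
      unfolding G_def F_def by (rule CI[OF ci0']) simp_all
    also have "\<dots> = (\<integral>\<^sup>+\<omega>. (\<lambda>x. indicator S x * \<gamma> (snd x)) (M0 \<omega>, C \<omega>) \<partial>M)"
      by (rule nn_integral_cong) (simp add: \<gamma>eq)
    also have "\<dots> = integral\<^sup>N L0 (\<lambda>x. indicator S x * \<gamma> (snd x))"
      unfolding L0_def by (rule nn_integral_distr[symmetric]) simp_all
    also have "\<dots> = integral\<^sup>N L1 (\<lambda>x. r x * (indicator S x * \<gamma> (snd x)))"
      unfolding rL[symmetric] by (rule nn_integral_density) (simp_all add: L1_def)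
    also have "\<dots> = (\<integral>\<^sup>+\<omega>. (\<lambda>x. r (snd x, fst x) * indicator S (snd x, fst x)) (C \<omega>, M1 \<omega>) * \<gamma> (C \<omega>) \<partial>M)"
      unfolding L1_def by (subst nn_integral_distr) (simp_all add: mult.assoc)
    also have "\<dots> = (\<integral>\<^sup>+\<omega>. (\<lambda>x. r (snd x, fst x) * indicator S (snd x, fst x)) (C \<omega>, M1 \<omega>) * ennreal (G B \<omega>) \<partial>M)"
      by (rule nn_integral_cong) (simp add: \<gamma>eq)
    also have "\<dots> = (\<integral>\<^sup>+\<omega>. (\<lambda>x. r (snd x, fst x) * indicator S (snd x, fst x)) (C \<omega>, M1 \<omega>) * indicator B (D \<omega>) \<partial>M)"
      unfolding G_def F_def by (rule CI[OF ci1', symmetric]) simp_all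
    also have "\<dots> = (\<integral>\<^sup>+\<omega>. r (fst ((M1 \<omega>, C \<omega>), D \<omega>)) * (indicator S (M1 \<omega>, C \<omega>) * indicator B (D \<omega>)) \<partial>M)"
      by (simp add: mult.assoc)
    also have "\<dots> = emeasure (density T1 (\<lambda>x. r (fst x))) (S \<times> B)"
      unfolding T1_def by (rule emT_dens[symmetric]) simp_all
    finally show "emeasure T0 (S \<times> B) = emeasure (density T1 (\<lambda>x. r (fst x))) (S \<times> B)" .
  qed
  have "AE x in T1. \<rho> x = r (fst x)"
    by (rule T1s.density_unique) (use dens T in \<open>simp_all add: T0_def T1_def\<close>)
  then have ae: "AE \<omega> in M. \<rho> ((M1 \<omega>, C \<omega>), D \<omega>) = r (M1 \<omega>, C \<omega>)"
    unfolding T1_def by (subst (asm) AE_distr_iff) simp_all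
  have "(\<integral>\<^sup>+\<omega>. \<rho> ((M1 \<omega>, C \<omega>), D \<omega>) * indicator E (Y \<omega>) \<partial>M) = (\<integral>\<^sup>+\<omega>. r (M1 \<omega>, C \<omega>) * indicator E (Y \<omega>) \<partial>M)"
    by (rule nn_integral_cong_AE) (use ae in auto)
  also have "\<dots> = (\<integral>\<^sup>+\<omega>. emeasure (K (M0 \<omega>, C \<omega>)) E \<partial>M)"
    by (rule main_pair[OF K, symmetric]) (use rL in \<open>simp_all add: L0_def L1_def\<close>)
  finally show ?thesis by simp
qed



lemma (in prob_space) org_val:
  fixes C :: "'a \<Rightarrow> 'c::euclidean_space" and M0 M1 MI :: "'a \<Rightarrow> 'm::euclidean_space"
    and Y1 YI :: "'a \<Rightarrow> real"
  assumes org: "organic M C M0 M1 Y1 MI YI"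
  and [measurable]: "C \<in> borel_measurable M" "M0 \<in> borel_measurable M" "M1 \<in> borel_measurable M"
    "MI \<in> borel_measurable M" "YI \<in> borel_measurable M"
  shows "\<exists>K. cond_distr_kernel M (\<lambda>\<omega>. (M1 \<omega>, C \<omega>)) borel Y1 borel K \<and>
     (\<forall>E\<in>sets borel. emeasure (distr M borel YI) E = (\<integral>\<^sup>+\<omega>. emeasure (K (M0 \<omega>, C \<omega>)) E \<partial>M))"
proof -
  obtain K1 where K1: "cond_distr_kernel M C borel MI borel K1" "cond_distr_kernel M C borel M0 borel K1"
    using org unfolding organic_def same_cond_distr_def by blast
  obtain K2 where K2: "cond_distr_kernel M (\<lambda>\<omega>. (MI \<omega>, C \<omega>)) borel YI borel K2"
      "cond_distr_kernel M (\<lambda>\<omega>. (M1 \<omega>, C \<omega>)) borel Y1 borel K2"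
    using org unfolding organic_def same_cond_distr_def by blast
  have law: "distr M borel (\<lambda>\<omega>. (MI \<omega>, C \<omega>)) = distr M borel (\<lambda>\<omega>. (M0 \<omega>, C \<omega>))"
    by (rule law_K1[OF K1]) simp_all
  have "emeasure (distr M borel YI) E = (\<integral>\<^sup>+\<omega>. emeasure (K2 (M0 \<omega>, C \<omega>)) E \<partial>M)"
    if E[measurable]: "E \<in> sets borel" for E
  proof -
    have km[measurable]: "(\<lambda>z. emeasure (K2 z) E) \<in> borel_measurable borel" using kernel_meas[OF K2(1) E] by simp
    have "emeasure (distr M borel YI) E = emeasure M (YI -` E \<inter> space M)"
      by (rule emeasure_distr) simp_all
    also have "\<dots> = (\<integral>\<^sup>+\<omega>. indicator (YI -` E \<inter> space M) \<omega> \<partial>M)"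
      by (rule nn_integral_indicator[symmetric]) simp
    also have "\<dots> = (\<integral>\<^sup>+\<omega>. (\<lambda>z. 1) (MI \<omega>, C \<omega>) * indicator E (YI \<omega>) \<partial>M)"
      by (rule nn_integral_cong) (auto simp: indicator_def)
    also have "\<dots> = (\<integral>\<^sup>+\<omega>. (\<lambda>z. 1) (MI \<omega>, C \<omega>) * emeasure (K2 (MI \<omega>, C \<omega>)) E \<partial>M)"
      by (rule kernel_nn[OF K2(1)]) simp_all
    also have "\<dots> = integral\<^sup>N (distr M borel (\<lambda>\<omega>. (MI \<omega>, C \<omega>))) (\<lambda>z. emeasure (K2 z) E)"
      by (simp add: nn_integral_distr)
    also have "\<dots> = (\<integral>\<^sup>+\<omega>. emeasure (K2 (M0 \<omega>, C \<omega>)) E \<partial>M)"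
      unfolding law by (simp add: nn_integral_distr)
    finally show ?thesis .
  qed
  with K2(2) show ?thesis by blast
qed

lemma (in prob_space) dens_transfer:
  fixes T0 T1 :: "'a \<Rightarrow> 'u::second_countable_topology" and a :: "'u \<Rightarrow> 'v::second_countable_topology"
  assumes [measurable]: "T0 \<in> borel_measurable M" "T1 \<in> borel_measurable M" "a \<in> borel_measurable borel"
    "\<rho> \<in> borel_measurable borel" "\<rho>' \<in> borel_measurable borel"
  and eq: "\<And>x. \<rho>' (a x) = \<rho> x"
  and dens: "distr M borel T0 = density (distr M borel T1) \<rho>"
  shows "distr M borel (\<lambda>\<omega>. a (T0 \<omega>)) = density (distr M borel (\<lambda>\<omega>. a (T1 \<omega>))) \<rho>'"
proof -
  have "distr M borel (\<lambda>\<omega>. a (T0 \<omega>)) = distr (distr M borel T0) borel a"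
    by (subst distr_distr) (simp_all add: comp_def)
  also have "\<dots> = distr (density (distr M borel T1) (\<lambda>x. \<rho>' (a x))) borel a"
    by (simp add: dens eq)
  also have "\<dots> = density (distr (distr M borel T1) borel a) \<rho>'"
    by (rule density_distr[symmetric]) simp_all
  also have "\<dots> = density (distr M borel (\<lambda>\<omega>. a (T1 \<omega>))) \<rho>'"
    by (subst distr_distr) (simp_all add: comp_def)
  finally show ?thesis .
qed

lemma (in prob_space) side_b:
  fixes C :: "'a \<Rightarrow> 'c::euclidean_space" and D :: "'a \<Rightarrow> 'd::euclidean_space"
    and M0 M1 MI :: "'a \<Rightarrow> 'm::euclidean_space" and Y1 YI :: "'a \<Rightarrow> real"
  assumes org: "organic M C M0 M1 Y1 MI YI" and ncc: "not_common_cause M D C M0 M1 Y1"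
  and [measurable]: "C \<in> borel_measurable M" "D \<in> borel_measurable M" "M0 \<in> borel_measurable M" "M1 \<in> borel_measurable M"
    "MI \<in> borel_measurable M" "YI \<in> borel_measurable M" "Y1 \<in> borel_measurable M"
  and rho[measurable]: "\<rho> \<in> borel_measurable borel"
  and dens: "distr M borel (\<lambda>\<omega>. ((M0 \<omega>, C \<omega>), D \<omega>)) = density (distr M borel (\<lambda>\<omega>. ((M1 \<omega>, C \<omega>), D \<omega>))) \<rho>"
  and E[measurable]: "E \<in> sets borel"
  shows "emeasure (distr M borel YI) E = (\<integral>\<^sup>+\<omega>. \<rho> ((M1 \<omega>, C \<omega>), D \<omega>) * indicator E (Y1 \<omega>) \<partial>M)"
proof -
  obtain K where K: "cond_distr_kernel M (\<lambda>\<omega>. (M1 \<omega>, C \<omega>)) borel Y1 borel K"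
    and v: "emeasure (distr M borel YI) E = (\<integral>\<^sup>+\<omega>. emeasure (K (M0 \<omega>, C \<omega>)) E \<partial>M)"
    using org_val[OF org] E by auto
  from ncc show ?thesis unfolding not_common_cause_def
  proof (elim disjE conjE)
    assume ci0: "cond_indep M D borel M0 borel C borel" and ci1: "cond_indep M D borel M1 borel C borel"
    show ?thesis unfolding v by (rule main_y[OF K ci0 ci1 _ _ _ _ _ E rho dens]) simp_all
  next
    assume ci: "cond_indep M D borel Y1 borel (\<lambda>\<omega>. (M1 \<omega>, C \<omega>)) borel"
    show ?thesis unfolding v by (rule main_x[OF K ci _ _ _ _ E rho dens]) simp_all
  qed
qed

lemma (in prob_space) side_a:
  fixes C :: "'a \<Rightarrow> 'c::euclidean_space"
    and M0 M1 MI :: "'a \<Rightarrow> 'm::euclidean_space" and Y1 YI :: "'a \<Rightarrow> real"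
  assumes org: "organic M C M0 M1 Y1 MI YI"
  and [measurable]: "C \<in> borel_measurable M" "M0 \<in> borel_measurable M" "M1 \<in> borel_measurable M"
    "MI \<in> borel_measurable M" "YI \<in> borel_measurable M" "Y1 \<in> borel_measurable M"
  and rho[measurable]: "\<rho> \<in> borel_measurable borel"
  and dens: "distr M borel (\<lambda>\<omega>. (M0 \<omega>, C \<omega>)) = density (distr M borel (\<lambda>\<omega>. (M1 \<omega>, C \<omega>))) \<rho>"
  and E[measurable]: "E \<in> sets borel"
  shows "emeasure (distr M borel YI) E = (\<integral>\<^sup>+\<omega>. \<rho> (M1 \<omega>, C \<omega>) * indicator E (Y1 \<omega>) \<partial>M)"
proof -
  obtain K where K: "cond_distr_kernel M (\<lambda>\<omega>. (M1 \<omega>, C \<omega>)) borel Y1 borel K"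
    and v: "emeasure (distr M borel YI) E = (\<integral>\<^sup>+\<omega>. emeasure (K (M0 \<omega>, C \<omega>)) E \<partial>M)"
    using org_val[OF org] E by auto
  show ?thesis unfolding v by (rule main_pair[OF K _ _ _ E rho dens]) simp_all
qed

lemma (in prob_space) RN_ex:
  fixes T0 T1 :: "'a \<Rightarrow> 'u::second_countable_topology"
  assumes [measurable]: "T0 \<in> borel_measurable M" "T1 \<in> borel_measurable M"
  and ac: "absolutely_continuous (distr M borel T1) (distr M borel T0)"
  shows "\<exists>\<rho>\<in>borel_measurable borel. distr M borel T0 = density (distr M borel T1) \<rho>"
proof -
  interpret L: sigma_finite_measure "distr M borel T1"
    by (rule prob_space_imp_sigma_finite, rule prob_space_distr) simp
  have "density (distr M borel T1) (RN_deriv (distr M borel T1) (distr M borel T0)) = distr M borel T0"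
    by (rule L.density_RN_deriv[OF ac]) simp
  moreover have "RN_deriv (distr M borel T1) (distr M borel T0) \<in> borel_measurable borel"
    using borel_measurable_RN_deriv[of "distr M borel T1" "distr M borel T0"] by simp
  ultimately show ?thesis by metis
qed

lemma dist_int_eq:
  fixes X X' :: "'a \<Rightarrow> real"
  assumes [measurable]: "X \<in> borel_measurable M" "X' \<in> borel_measurable M"
  and eq: "\<And>E. E \<in> sets borel \<Longrightarrow> emeasure (distr M borel X) E = emeasure (distr M borel X') E"
  shows "(\<integral>\<omega>. X \<omega> \<partial>M) = (\<integral>\<omega>. X' \<omega> \<partial>M)"
proof -
  have d: "distr M borel X = distr M borel X'"
    by (rule measure_eqI) (simp_all add: eq)
  have "(\<integral>\<omega>. X \<omega> \<partial>M) = (\<integral>x. x \<partial>distr M borel X)" by (rule integral_distr[symmetric]) simp_all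
  also have "\<dots> = (\<integral>x. x \<partial>distr M borel X')" by (simp add: d)
  also have "\<dots> = (\<integral>\<omega>. X' \<omega> \<partial>M)" by (rule integral_distr) simp_all
  finally show ?thesis .
qed



theorem theorem5p2:
  fixes P :: "'a measure"
    and C :: "'a \<Rightarrow> 'c::euclidean_space"
    and Ct :: "'a \<Rightarrow> 'd::euclidean_space"
    and M0 M1 MI MI' :: "'a \<Rightarrow> 'm::euclidean_space"
    and Y0 Y1 YI YI' :: "'a \<Rightarrow> real"
  assumes "prob_space P"
    and "C \<in> borel_measurable P" and "Ct \<in> borel_measurable P"
    and "M0 \<in> borel_measurable P" and "M1 \<in> borel_measurable P"
    and "MI \<in> borel_measurable P" and "MI' \<in> borel_measurable P"
    and "integrable P Y0" and "integrable P Y1"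
    and "integrable P YI" and "integrable P YI'"
  shows
    "(organic P C M0 M1 Y1 MI YI \<and> organic P C M0 M1 Y1 MI' YI' \<and>
      absolutely_continuous (distr P borel (\<lambda>\<omega>. (M1 \<omega>, C \<omega>)))
                            (distr P borel (\<lambda>\<omega>. (M0 \<omega>, C \<omega>)))
      \<longrightarrow> (\<integral>\<omega>. YI \<omega> \<partial>P) = (\<integral>\<omega>. YI' \<omega> \<partial>P) \<and>
          (\<integral>\<omega>. YI \<omega> \<partial>P) - (\<integral>\<omega>. Y0 \<omega> \<partial>P) = (\<integral>\<omega>. YI' \<omega> \<partial>P) - (\<integral>\<omega>. Y0 \<omega> \<partial>P) \<and>
          (\<integral>\<omega>. Y1 \<omega> \<partial>P) - (\<integral>\<omega>. YI \<omega> \<partial>P) = (\<integral>\<omega>. Y1 \<omega> \<partial>P) - (\<integral>\<omega>. YI' \<omega> \<partial>P))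
     \<and>
     (not_common_cause P C Ct M0 M1 Y1 \<and> not_common_cause P Ct C M0 M1 Y1 \<and>
      organic P C M0 M1 Y1 MI YI \<and> organic P Ct M0 M1 Y1 MI' YI' \<and>
      absolutely_continuous (distr P borel (\<lambda>\<omega>. (M1 \<omega>, C \<omega>, Ct \<omega>)))
                            (distr P borel (\<lambda>\<omega>. (M0 \<omega>, C \<omega>, Ct \<omega>)))
      \<longrightarrow> (\<integral>\<omega>. YI \<omega> \<partial>P) = (\<integral>\<omega>. YI' \<omega> \<partial>P) \<and>
          (\<integral>\<omega>. YI \<omega> \<partial>P) - (\<integral>\<omega>. Y0 \<omega> \<partial>P) = (\<integral>\<omega>. YI' \<omega> \<partial>P) - (\<integral>\<omega>. Y0 \<omega> \<partial>P) \<and>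
          (\<integral>\<omega>. Y1 \<omega> \<partial>P) - (\<integral>\<omega>. YI \<omega> \<partial>P) = (\<integral>\<omega>. Y1 \<omega> \<partial>P) - (\<integral>\<omega>. YI' \<omega> \<partial>P))"
proof -
  interpret prob_space P by (rule assms(1))
  note m[measurable] = assms(2-7)
  have [measurable]: "Y1 \<in> borel_measurable P" "YI \<in> borel_measurable P" "YI' \<in> borel_measurable P"
    using assms(9-11) by (simp_all add: borel_measurable_integrable)
  have A: "(\<integral>\<omega>. YI \<omega> \<partial>P) = (\<integral>\<omega>. YI' \<omega> \<partial>P)"
    if o1: "organic P C M0 M1 Y1 MI YI" and o2: "organic P C M0 M1 Y1 MI' YI'"
    and ac: "absolutely_continuous (distr P borel (\<lambda>\<omega>. (M1 \<omega>, C \<omega>))) (distr P borel (\<lambda>\<omega>. (M0 \<omega>, C \<omega>)))"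
  proof -
    obtain \<rho> where rho[measurable]: "\<rho> \<in> borel_measurable borel"
      and dens: "distr P borel (\<lambda>\<omega>. (M0 \<omega>, C \<omega>)) = density (distr P borel (\<lambda>\<omega>. (M1 \<omega>, C \<omega>))) \<rho>"
      using RN_ex[OF _ _ ac] by auto
    show ?thesis
    proof (rule dist_int_eq)
      fix E :: "real set" assume E: "E \<in> sets borel"
      show "emeasure (distr P borel YI) E = emeasure (distr P borel YI') E"
        using side_a[OF o1 _ _ _ _ _ _ rho dens E] side_a[OF o2 _ _ _ _ _ _ rho dens E] by simp
    qed simp_all
  qed
  have B: "(\<integral>\<omega>. YI \<omega> \<partial>P) = (\<integral>\<omega>. YI' \<omega> \<partial>P)"
    if n1: "not_common_cause P C Ct M0 M1 Y1" and n2: "not_common_cause P Ct C M0 M1 Y1"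
    and o1: "organic P C M0 M1 Y1 MI YI" and o2: "organic P Ct M0 M1 Y1 MI' YI'"
    and ac: "absolutely_continuous (distr P borel (\<lambda>\<omega>. (M1 \<omega>, C \<omega>, Ct \<omega>))) (distr P borel (\<lambda>\<omega>. (M0 \<omega>, C \<omega>, Ct \<omega>)))"
  proof -
    obtain \<rho> where rho[measurable]: "\<rho> \<in> borel_measurable borel"
      and dens: "distr P borel (\<lambda>\<omega>. (M0 \<omega>, C \<omega>, Ct \<omega>)) = density (distr P borel (\<lambda>\<omega>. (M1 \<omega>, C \<omega>, Ct \<omega>))) \<rho>"
      using RN_ex[OF _ _ ac] by auto
    define \<rho>1 where "\<rho>1 = (\<lambda>y::('m \<times> 'c) \<times> 'd. \<rho> (fst (fst y), (snd (fst y), snd y)))"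
    define \<rho>2 where "\<rho>2 = (\<lambda>y::('m \<times> 'd) \<times> 'c. \<rho> (fst (fst y), (snd y, snd (fst y))))"
    have [measurable]: "\<rho>1 \<in> borel_measurable borel" "\<rho>2 \<in> borel_measurable borel"
      unfolding \<rho>1_def \<rho>2_def by measurable
    have d1: "distr P borel (\<lambda>\<omega>. ((M0 \<omega>, C \<omega>), Ct \<omega>)) = density (distr P borel (\<lambda>\<omega>. ((M1 \<omega>, C \<omega>), Ct \<omega>))) \<rho>1"
      using dens_transfer[where a="\<lambda>x. ((fst x, fst (snd x)), snd (snd x))" and \<rho>'=\<rho>1, OF _ _ _ _ _ _ dens]
      by (simp add: \<rho>1_def)
    have d2: "distr P borel (\<lambda>\<omega>. ((M0 \<omega>, Ct \<omega>), C \<omega>)) = density (distr P borel (\<lambda>\<omega>. ((M1 \<omega>, Ct \<omega>), C \<omega>))) \<rho>2"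
      using dens_transfer[where a="\<lambda>x. ((fst x, snd (snd x)), fst (snd x))" and \<rho>'=\<rho>2, OF _ _ _ _ _ _ dens]
      by (simp add: \<rho>2_def)
    show ?thesis
    proof (rule dist_int_eq)
      fix E :: "real set" assume E: "E \<in> sets borel"
      show "emeasure (distr P borel YI) E = emeasure (distr P borel YI') E"
        using side_b[OF o1 n2 _ _ _ _ _ _ _ _ d1 E] side_b[OF o2 n1 _ _ _ _ _ _ _ _ d2 E]
        by (simp add: \<rho>1_def \<rho>2_def)
    qed simp_all
  qed
  show ?thesis using A B by auto
qed

end
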